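(* Let $L$ be a subspace of $\bigwedge^{k}V$. If $N_{j\to i}L=L$ for all distinct $i,j\in[n]$, then $L$ has a basis consisting of monomials $e_S=e_{s_1}\wedge\cdots\wedge e_{s_k}$ ($S=\{s_1<\cdots<s_k\}\subseteq[n]$).
   Context: $\mathbb{F}$ is a field (assumed throughout the paper, for expository purposes, to have characteristic not $2$), $V$ is an $n$-dimensional $\mathbb{F}$-vector space with a fixed basis $e_1,\dots,e_n$, and $\bigwedge V$ its exterior algebra. For $j\in[n]$, $V^{(j)}$ is the span of $\{e_h:h\neq j\}$. Slow shift: for distinct $i,j\in[n]$ and nonzero $m\in\bigwedge^kV$, write uniquely $m=x+e_j\wedge y$ with $x\in\bigwedge^kV^{(j)}$, $y\in\bigwedge^{k-1}V^{(j)}$, and set $N_{j\to i}m=x+e_i\wedge y$ if this is nonzero, and $N_{j\to i}m=e_j\wedge y$ otherwise (the limit as $t\to0$ of the projective action of the linear map $e_j\mapsto e_i+te_j$ fixing the other $e_h$). For a subspace $L$ of $\bigwedge^kV$, $N_{j\to i}L$ is the span of $\{N_{j\to i}m:m\in L\setminus\{0\}\}$. *)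

theory Defs
  imports Main HOL.Vector_Spaces "HOL-Library.Function_Algebras"
begin

text \<open>Coordinate model of the exterior algebra of V = F^n with basis e_1,...,e_n.
  An element of the exterior algebra is its coefficient function on subsets S of {1..n}:
  m = sum over S of (m S) e_S, where e_S = e_s1 wedge ... wedge e_sk with s1 < ... < sk.\<close>

definition fscale :: "'a::field \<Rightarrow> (nat set \<Rightarrow> 'a) \<Rightarrow> (nat set \<Rightarrow> 'a)" where
  "fscale c f = (\<lambda>S. c * f S)"

interpretation fvs: vector_space "fscale :: 'a::field \<Rightarrow> (nat set \<Rightarrow> 'a) \<Rightarrow> _"
  by unfold_locales (auto simp: fscale_def fun_eq_iff algebra_simps)

definition ext_pow :: "nat \<Rightarrow> nat \<Rightarrow> (nat set \<Rightarrow> 'a::field) set" where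
  "ext_pow n k = {m. \<forall>S. m S \<noteq> 0 \<longrightarrow> S \<subseteq> {1..n} \<and> card S = k}"

definition mono :: "nat set \<Rightarrow> (nat set \<Rightarrow> 'a::field)" where
  "mono S = (\<lambda>T. if T = S then 1 else 0)"

text \<open>Sign with e_i wedge e_T = wsign i T * e_(T union {i}) for i not in T.\<close>
definition wsign :: "nat \<Rightarrow> nat set \<Rightarrow> 'a::field" where
  "wsign i T = (-1) ^ card {t\<in>T. t < i}"

definition wedge_e :: "nat \<Rightarrow> (nat set \<Rightarrow> 'a::field) \<Rightarrow> (nat set \<Rightarrow> 'a)" where
  "wedge_e i y = (\<lambda>S. if i \<in> S then wsign i (S - {i}) * y (S - {i}) else 0)"

text \<open>Decomposition m = x + e_j wedge y with x, y not involving e_j.\<close>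
definition xpart :: "nat \<Rightarrow> (nat set \<Rightarrow> 'a::field) \<Rightarrow> (nat set \<Rightarrow> 'a)" where
  "xpart j m = (\<lambda>S. if j \<in> S then 0 else m S)"

definition ypart :: "nat \<Rightarrow> (nat set \<Rightarrow> 'a::field) \<Rightarrow> (nat set \<Rightarrow> 'a)" where
  "ypart j m = (\<lambda>T. if j \<in> T then 0 else wsign j T * m (insert j T))"

definition slow_shift :: "nat \<Rightarrow> nat \<Rightarrow> (nat set \<Rightarrow> 'a::field) \<Rightarrow> (nat set \<Rightarrow> 'a)" where
  "slow_shift j i m =
     (let x = xpart j m; y = ypart j m
      in if x + wedge_e i y \<noteq> 0 then x + wedge_e i y else wedge_e j y)"

definition slow_shift_space :: "nat \<Rightarrow> nat \<Rightarrow> (nat set \<Rightarrow> 'a::field) set \<Rightarrow> (nat set \<Rightarrow> 'a) set" where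
  "slow_shift_space j i L = fvs.span (slow_shift j i ` (L - {0}))"

lemma decomposition: "m = xpart j m + wedge_e j (ypart j m)"
  by (auto simp: fun_eq_iff xpart_def ypart_def wedge_e_def wsign_def insert_absorb
           simp flip: power_add mult.assoc)

end

theory Submission
  imports Defs
begin

lemma sum_fun_app: "(sum f A) x = (\<Sum>a\<in>A. f a x)"
  by (induction A rule: infinite_finite_induct) auto

lemma wsign_sq: "wsign i T * wsign i T = (1::'a::field)"
  by (simp add: wsign_def flip: power_add)

definition PP :: "nat \<Rightarrow> nat \<Rightarrow> (nat set \<Rightarrow> 'a::field) \<Rightarrow> (nat set \<Rightarrow> 'a)" where
  "PP j i m = xpart j m + wedge_e i (ypart j m)"

lemma PP_apply: "i \<noteq> j \<Longrightarrow> PP j i m S = (if j \<in> S then 0 else m S + (if i \<in> S \<and> j \<noteq> i then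
     wsign i (S - {i}) * (wsign j (S - {i}) * m (insert j (S - {i}))) else 0))"
  by (auto simp: PP_def xpart_def wedge_e_def ypart_def)

lemma PP_in_j: "i \<noteq> j \<Longrightarrow> j \<in> S \<Longrightarrow> PP j i m S = 0"
  by (simp add: PP_apply)

lemma P_comp_zero:
  fixes m :: "nat set \<Rightarrow> 'a::field"
  assumes ij: "i \<noteq> j"
  shows "PP j i (m - PP i j (PP j i m)) = 0"
proof
  fix S
  define u where "u = PP j i m"
  define w where "w = PP i j u"
  show "PP j i (m - PP i j (PP j i m)) S = 0 S"
  proof (cases "j \<in> S")
    case True thus ?thesis using ij by (simp add: PP_in_j)
  next
    case jS: False
    show ?thesis
    proof (cases "i \<in> S")
      case False
      thus ?thesis using jS ij by (simp add: PP_apply)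
    next
      case iS: True
      define T where "T = S - {i}"
      define R where "R = insert j T"
      have jT: "j \<notin> T" "i \<notin> T" using jS by (auto simp: T_def)
      have SI: "insert i T = S" using iS by (auto simp: T_def)
      have R1: "j \<in> R" "i \<notin> R" "R - {j} = T" using jT using ij by (auto simp: R_def)
      have uR: "u R = 0" unfolding u_def using ij by (simp add: PP_in_j R1)
      have uS: "u S = m S + wsign i T * (wsign j T * m R)"
        unfolding u_def using jS iS ij by (simp add: PP_apply T_def R_def)
      have wR: "w R = wsign j T * (wsign i T * u S)"
        unfolding w_def PP_def xpart_def wedge_e_def ypart_def
        using R1 jT SI uR by simp
      have wS: "w S = 0" unfolding w_def using iS ij by (simp add: PP_in_j)
      have "PP j i (m - w) S = (m S - w S) + wsign i T * (wsign j T * (m R - w R))"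
        using jS iS ij by (simp add: PP_apply T_def R_def)
      also have "\<dots> = m S - (wsign i T * wsign i T) * ((wsign j T * wsign j T) * m S)"
      proof -
        have a: "wsign i T * wsign i T = (1::'a)" and b: "wsign j T * wsign j T = (1::'a)"
          by (rule wsign_sq)+
        show ?thesis unfolding wS wR uS using a b by algebra
      qed
      also have "\<dots> = 0" by (simp add: wsign_sq)
      finally show ?thesis by (simp add: u_def w_def)
    qed
  qed
qed

lemma slow_shift_PP: "slow_shift j i m = (if PP j i m \<noteq> 0 then PP j i m else wedge_e j (ypart j m))"
  by (simp add: slow_shift_def PP_def Let_def)

lemma xpart_zero[simp]: "xpart j 0 = 0"
  by (simp add: xpart_def fun_eq_iff)

lemma ypart_zero[simp]: "ypart j 0 = 0"
  by (simp add: ypart_def fun_eq_iff)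

lemma wedge_zero[simp]: "wedge_e j 0 = 0"
  by (simp add: wedge_e_def fun_eq_iff)

lemma PP_zero[simp]: "PP j i 0 = 0"
  by (simp add: PP_def)

lemma closedP:
  assumes sub: "fvs.subspace L" and cl: "\<forall>m\<in>L. m \<noteq> 0 \<longrightarrow> slow_shift j i m \<in> L" and m: "m \<in> L"
  shows "PP j i m \<in> L"
proof (cases "m = 0")
  case True thus ?thesis using fvs.subspace_0[OF sub] by simp
next
  case False
  show ?thesis
  proof (cases "PP j i m = 0")
    case True thus ?thesis using fvs.subspace_0[OF sub] by simp
  next
    case F: False
    have "slow_shift j i m \<in> L" using cl m False by blast
    thus ?thesis using F by (simp add: slow_shift_PP)
  qed
qed

lemma closedX0:
  assumes sub: "fvs.subspace L" and cl: "\<forall>m\<in>L. m \<noteq> 0 \<longrightarrow> slow_shift j i m \<in> L" and m: "m \<in> L"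
    and z: "PP j i m = 0"
  shows "xpart j m \<in> L"
proof (cases "m = 0")
  case True thus ?thesis using fvs.subspace_0[OF sub] by simp
next
  case False
  have "slow_shift j i m \<in> L" using cl m False by blast
  hence w: "wedge_e j (ypart j m) \<in> L" using z by (simp add: slow_shift_PP)
  have "xpart j m = m - wedge_e j (ypart j m)"
    by (metis add_diff_cancel_right' decomposition)
  thus ?thesis using fvs.subspace_diff[OF sub m w] by simp
qed

lemma F1:
  assumes ij: "i \<noteq> j" and sub: "fvs.subspace L"
    and cl1: "\<forall>m\<in>L. m \<noteq> 0 \<longrightarrow> slow_shift j i m \<in> L"
    and cl2: "\<forall>m\<in>L. m \<noteq> 0 \<longrightarrow> slow_shift i j m \<in> L" and m: "m \<in> L"
  shows "(\<lambda>S. if i \<in> S \<and> j \<notin> S then m S else 0) \<in> L"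
proof -
  define u where "u = PP j i m"
  define w where "w = PP i j u"
  have uL: "u \<in> L" unfolding u_def by (rule closedP[OF sub cl1 m])
  have wL: "w \<in> L" unfolding w_def by (rule closedP[OF sub cl2 uL])
  have mL: "m - w \<in> L" by (rule fvs.subspace_diff[OF sub m wL])
  have z: "PP j i (m - w) = 0" unfolding w_def u_def by (rule P_comp_zero[OF ij])
  have x: "xpart j (m - w) \<in> L" by (rule closedX0[OF sub cl1 mL z])
  have "xpart j (m - w) = (\<lambda>S. if i \<in> S \<and> j \<notin> S then m S else 0)"
  proof
    fix S
    show "xpart j (m - w) S = (if i \<in> S \<and> j \<notin> S then m S else 0)"
      using ij by (simp add: xpart_def w_def u_def PP_apply)
  qed
  thus ?thesis using x by simp
qed

lemma XC:
  assumes ij: "i \<noteq> j" and sub: "fvs.subspace L"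
    and cl1: "\<forall>m\<in>L. m \<noteq> 0 \<longrightarrow> slow_shift j i m \<in> L"
    and cl2: "\<forall>m\<in>L. m \<noteq> 0 \<longrightarrow> slow_shift i j m \<in> L" and m: "m \<in> L"
  shows "xpart j m \<in> L"
proof -
  define c where "c = (\<lambda>S. if j \<in> S \<and> i \<notin> S then m S else 0)"
  have cL: "c \<in> L" unfolding c_def using F1[of j i L m] ij sub cl1 cl2 m by blast
  have d: "m - c \<in> L" by (rule fvs.subspace_diff[OF sub m cL])
  have p: "PP j i (m - c) \<in> L" by (rule closedP[OF sub cl1 d])
  have "PP j i (m - c) = xpart j m"
  proof
    fix S
    show "PP j i (m - c) S = xpart j m S"
      using ij by (simp add: xpart_def c_def PP_apply)
  qed
  thus ?thesis using p by simp
qed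


theorem corollary3p14:
  fixes L :: "(nat set \<Rightarrow> 'a::field) set" and n k :: nat
  assumes char: "(2::'a) \<noteq> 0"
    and sub: "fvs.subspace L" and inpow: "L \<subseteq> ext_pow n k"
    and fixed: "\<forall>i\<in>{1..n}. \<forall>j\<in>{1..n}. i \<noteq> j \<longrightarrow> slow_shift_space j i L = L"
  shows "\<exists>B. B \<subseteq> {mono S | S. S \<subseteq> {1..n} \<and> card S = k}
              \<and> fvs.independent B \<and> fvs.span B = L"
proof -
  have cl: "\<forall>m\<in>L. m \<noteq> 0 \<longrightarrow> slow_shift j i m \<in> L"
    if "i \<in> {1..n}" "j \<in> {1..n}" "i \<noteq> j" for i j
  proof (intro ballI impI)
    fix m assume "m \<in> L" "m \<noteq> 0"
    hence "slow_shift j i m \<in> slow_shift_space j i L"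
      unfolding slow_shift_space_def by (intro fvs.span_base) auto
    thus "slow_shift j i m \<in> L" using fixed that by auto
  qed
  have supp: "S \<subseteq> {1..n} \<and> card S = k" if "m \<in> L" "m S \<noteq> 0" for m S
    using subsetD[OF inpow that(1)] that(2) unfolding ext_pow_def by simp
  have XA: "xpart j m \<in> L" if j: "j \<in> {1..n}" and m: "m \<in> L" for j m
  proof (cases "\<exists>i\<in>{1..n}. i \<noteq> j")
    case True
    then obtain i where i: "i \<in> {1..n}" "i \<noteq> j" by blast
    show ?thesis using XC[OF i(2) sub cl[OF i(1) j i(2)] cl[OF j i(1) i(2)[symmetric]] m] .
  next
    case False
    have N: "{1..n} = {j}"
    proof
      show "{1..n} \<subseteq> {j}" using False by blast
      show "{j} \<subseteq> {1..n}" using j by blast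
    qed
    have "xpart j m = (if k = 0 then m else 0)"
    proof
      fix S
      show "xpart j m S = (if k = 0 then m else 0) S"
      proof (cases "m S = 0")
        case True thus ?thesis by (simp add: xpart_def)
      next
        case False
        hence "S \<subseteq> {j}" "card S = k" using supp[OF m False] N by auto
        hence "(S = {} \<and> k = 0) \<or> (S = {j} \<and> k = 1)" by (auto simp: subset_singleton_iff)
        thus ?thesis by (auto simp: xpart_def)
      qed
    qed
    thus ?thesis using m fvs.subspace_0[OF sub] by simp
  qed
  have PJ: "(\<lambda>T. if \<forall>j\<in>J. (j \<in> T \<longleftrightarrow> j \<in> S) then m T else 0) \<in> L"
    if "finite J" "J \<subseteq> {1..n}" "m \<in> L" for J S m
    using that
  proof (induction J rule: finite_induct)
    case empty thus ?case by simp
  next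
    case (insert j J)
    define g where "g = (\<lambda>T. if \<forall>j\<in>J. (j \<in> T \<longleftrightarrow> j \<in> S) then m T else 0)"
    have gL: "g \<in> L" using insert unfolding g_def by auto
    have j: "j \<in> {1..n}" using insert by auto
    have xg: "xpart j g \<in> L" by (rule XA[OF j gL])
    show ?case
    proof (cases "j \<in> S")
      case True
      have "g - xpart j g = (\<lambda>T. if \<forall>j\<in>insert j J. (j \<in> T \<longleftrightarrow> j \<in> S) then m T else 0)"
        using True by (auto simp: fun_eq_iff g_def xpart_def)
      thus ?thesis using fvs.subspace_diff[OF sub gL xg] by simp
    next
      case False
      have "xpart j g = (\<lambda>T. if \<forall>j\<in>insert j J. (j \<in> T \<longleftrightarrow> j \<in> S) then m T else 0)"
        using False by (auto simp: fun_eq_iff g_def xpart_def)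
      thus ?thesis using xg by simp
    qed
  qed
  have MC: "mono S \<in> L" if m: "m \<in> L" and mS: "m S \<noteq> 0" for m S
  proof -
    have S: "S \<subseteq> {1..n}" using supp[OF m mS] by blast
    have "(\<lambda>T. if \<forall>j\<in>{1..n}. (j \<in> T \<longleftrightarrow> j \<in> S) then m T else 0) = fscale (m S) (mono S)"
    proof
      fix T
      show "(if \<forall>j\<in>{1..n}. (j \<in> T \<longleftrightarrow> j \<in> S) then m T else 0) = fscale (m S) (mono S) T"
      proof (cases "m T = 0")
        case True thus ?thesis by (auto simp: fscale_def mono_def)
      next
        case False
        have T: "T \<subseteq> {1..n}" using supp[OF m False] by blast
        have "(\<forall>j\<in>{1..n}. (j \<in> T \<longleftrightarrow> j \<in> S)) \<longleftrightarrow> T = S" using S T by blast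
        thus ?thesis by (auto simp: fscale_def mono_def)
      qed
    qed
    hence "fscale (m S) (mono S) \<in> L" using PJ[of "{1..n}" m S] m by simp
    hence "fscale (inverse (m S)) (fscale (m S) (mono S)) \<in> L" by (rule fvs.subspace_scale[OF sub])
    moreover have "fscale (inverse (m S)) (fscale (m S) (mono S)) = mono S"
      using mS by (simp add: fscale_def fun_eq_iff)
    ultimately show ?thesis by simp
  qed
  define B where "B = {(mono S :: nat set \<Rightarrow> 'a) | S. S \<subseteq> {1..n} \<and> card S = k \<and> mono S \<in> L}"
  have B1: "B \<subseteq> {mono S | S. S \<subseteq> {1..n} \<and> card S = k}" unfolding B_def by blast
  have monoS: "mono S S = (1::'a)" "T \<noteq> S \<Longrightarrow> mono S T = (0::'a)" for S T
    by (auto simp: mono_def)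
  have ind: "fvs.independent B"
    unfolding fvs.independent_explicit_module
  proof (intro allI impI)
    fix t u v
    assume t: "finite t" "t \<subseteq> B" "(\<Sum>v\<in>t. fscale (u v) v) = 0" "v \<in> t"
    then obtain S where vS: "v = mono S" unfolding B_def by blast
    have "0 = (\<Sum>v\<in>t. fscale (u v) v) S" using t by simp
    also have "\<dots> = (\<Sum>w\<in>t. u w * w S)" by (simp add: sum_fun_app fscale_def)
    also have "\<dots> = u v * v S"
    proof (rule sum.remove[OF t(1) t(4), THEN trans])
      have "(\<Sum>w\<in>t - {v}. u w * w S) = 0"
      proof (rule sum.neutral, rule ballI)
        fix w assume w: "w \<in> t - {v}"
        then obtain R where wR: "w = mono R" using t unfolding B_def by blast
        hence "R \<noteq> S" using w vS by auto
        thus "u w * w S = 0" using wR by (simp add: mono_def)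
      qed
      thus "u v * v S + (\<Sum>w\<in>t - {v}. u w * w S) = u v * v S" by simp
    qed
    also have "\<dots> = u v" using vS by (simp add: mono_def)
    finally show "u v = 0" by simp
  qed
  have BL: "B \<subseteq> L" unfolding B_def by blast
  have "L \<subseteq> fvs.span B"
  proof
    fix m assume m: "m \<in> L"
    define A where "A = {S. S \<subseteq> {1..n} \<and> m S \<noteq> 0}"
    have fA: "finite A" unfolding A_def by (rule finite_subset[of _ "Pow {1..n}"]) auto
    have "m = (\<Sum>S\<in>A. fscale (m S) (mono S))"
    proof
      fix T
      have "(\<Sum>S\<in>A. fscale (m S) (mono S)) T = (\<Sum>S\<in>A. m S * mono S T)"
        by (simp add: sum_fun_app fscale_def)
      also have "\<dots> = (\<Sum>S\<in>A. if T = S then m S else 0)"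
        by (rule sum.cong) (auto simp: mono_def)
      also have "\<dots> = (if T \<in> A then m T else 0)"
        using fA by (simp add: sum.delta)
      also have "\<dots> = m T"
        using supp[OF m, of T] by (auto simp: A_def)
      finally show "m T = (\<Sum>S\<in>A. fscale (m S) (mono S)) T" by simp
    qed
    also have "\<dots> \<in> fvs.span B"
    proof (rule fvs.span_sum, rule fvs.span_scale, rule fvs.span_base)
      fix S assume "S \<in> A"
      hence "m S \<noteq> 0" by (simp add: A_def)
      thus "mono S \<in> B" unfolding B_def using supp[OF m] MC[OF m] by blast
    qed
    finally show "m \<in> fvs.span B" .
  qed
  hence "fvs.span B = L" using fvs.span_subspace[OF BL _ sub] by simp
  thus ?thesis using B1 ind by blast
qed

end
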